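(* Let $I=[-1,1]$, $d\ge 2$, and let $p:I^d\to\mathbb{R}$ be a probability density function which is finite-rank in the following sense: for every $1\le k\le d-1$, the reshaped function $p(x_{1:k};x_{k+1:d})$, viewed as a Hilbert–Schmidt integral kernel from $L^2(I^{d-k})$ to $L^2(I^{k})$, has finite rank $r_k$. For $1\le k\le d-1$ let $\{\Phi_k(x_{1:k};\alpha_k)\}_{1\le\alpha_k\le r_k}$ be the first $r_k$ left singular vectors of $p(x_{1:k};x_{k+1:d})$. Then there exists a unique solution $G_1:I\times[r_1]\to\mathbb{R}$, $G_k:[r_{k-1}]\times I\times[r_k]\to\mathbb{R}$ for $2\le k\le d-1$, and $G_d:[r_{d-1}]\times I\to\mathbb{R}$ to the system of core determining equations $$G_1(x_1;\alpha_1)=\Phi_1(x_1;\alpha_1),$$ $$\sum_{\alpha_{k-1}=1}^{r_{k-1}}\Phi_{k-1}(x_{1:k-1};\alpha_{k-1})\,G_k(\alpha_{k-1};x_k,\alpha_k)=\Phi_k(x_{1:k-1};x_k,\alpha_k),\quad 2\le k\le d-1,$$ $$\sum_{\alpha_{d-1}=1}^{r_{d-1}}\Phi_{d-1}(x_{1:d-1};\alpha_{d-1})\,G_d(\alpha_{d-1};x_d)=p(x_{1:d-1};x_d),$$ and these cores give an exact tensor-train representation of $p$: $$p(x_1,\dots,x_d)=\sum_{\alpha_1=1}^{r_1}\cdots\sum_{\alpha_{d-1}=1}^{r_{d-1}}G_1(x_1,\alpha_1)G_2(\alpha_1,x_2,\alpha_2)\cdots G_d(\alpha_{d-1},x_d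).$$
   Context: Notation: $x_{m:n}$ denotes the variables $x_m,\dots,x_n$, and $[n]=\{1,\dots,n\}$. For $1\le k\le d-1$, $p(x_{1:k};x_{k+1:d})$ denotes $p$ regarded as a function of the two groups of variables $x_{1:k}\in I^k$ and $x_{k+1:d}\in I^{d-k}$, i.e. as the kernel of the integral operator $f\mapsto\int_{I^{d-k}}p(x_{1:k};x_{k+1:d})f(x_{k+1:d})\,dx_{k+1:d}$; it is assumed to be Hilbert–Schmidt so that it admits a singular value (Schmidt) decomposition, and "finite rank $r_k$" means the range (column space) of this operator has dimension $r_k$. The left singular vectors $\Phi_k(\cdot;\alpha_k)$, $1\le\alpha_k\le r_k$, are orthonormal functions in $L^2(I^k)$ spanning this range. In the $k$-th equation, $\Phi_k(x_{1:k-1};x_k,\alpha_k)$ is just $\Phi_k(x_{1:k};\alpha_k)$ with its arguments grouped differently. *)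

theory Defs
  imports "HOL-Analysis.Analysis"
begin

text \<open>Variables are indexed 1..d; a point of I^A (A a finite index set) is an
  extensional function nat => real, as in the product measure PiM.\<close>

definition Imeas :: "real measure" where
  "Imeas = restrict_space lborel {-1..1}"

definition cube :: "nat set \<Rightarrow> (nat \<Rightarrow> real) measure" where
  "cube A = PiM A (\<lambda>_. Imeas)"

definition probability_density :: "nat \<Rightarrow> ((nat \<Rightarrow> real) \<Rightarrow> real) \<Rightarrow> bool" where
  "probability_density d p \<longleftrightarrow>
     p \<in> borel_measurable (cube {1..d}) \<and>
     (\<forall>x\<in>space (cube {1..d}). 0 \<le> p x) \<and>
     integrable (cube {1..d}) p \<and> (\<integral>x. p x \<partial>cube {1..d}) = 1"

definition orthonormal_L2 ::
  "(nat \<Rightarrow> real) measure \<Rightarrow> nat \<Rightarrow> ((nat \<Rightarrow> real) \<Rightarrow> nat \<Rightarrow> real) \<Rightarrow> bool" where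
  "orthonormal_L2 M r f \<longleftrightarrow>
     (\<forall>a\<in>{1..r}. (\<lambda>x. f x a) \<in> borel_measurable M \<and> integrable M (\<lambda>x. (f x a)^2)) \<and>
     (\<forall>a\<in>{1..r}. \<forall>b\<in>{1..r}. (\<integral>x. f x a * f x b \<partial>M) = (if a = b then 1 else 0))"

text \<open>Schmidt (singular value) decomposition of the reshaped kernel
  p(x_{1:k}; x_{k+1:d}) with exactly r terms (i.e. the kernel has rank r), with
  singular values ordered decreasingly; Phi(.;1..r) are then its (first) r left
  singular vectors.\<close>
definition left_singular_vectors ::
  "nat \<Rightarrow> ((nat \<Rightarrow> real) \<Rightarrow> real) \<Rightarrow> nat \<Rightarrow> nat \<Rightarrow> ((nat \<Rightarrow> real) \<Rightarrow> nat \<Rightarrow> real) \<Rightarrow> bool" where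
  "left_singular_vectors d p k r \<Phi> \<longleftrightarrow>
     (\<exists>(\<sigma>::nat \<Rightarrow> real) \<Psi>.
        (\<forall>a\<in>{1..r}. 0 < \<sigma> a) \<and> (\<forall>a\<in>{1..<r}. \<sigma> (Suc a) \<le> \<sigma> a) \<and>
        orthonormal_L2 (cube {1..k}) r \<Phi> \<and>
        orthonormal_L2 (cube {Suc k..d}) r \<Psi> \<and>
        (AE x in cube {1..d}. p x =
            (\<Sum>a\<in>{1..r}. \<sigma> a * \<Phi> (restrict x {1..k}) a * \<Psi> (restrict x {Suc k..d}) a)))"

text \<open>Core determining equations (holding almost everywhere). G1 t a = G_1(t;a),
  Gm k a t b = G_k(a;t,b) for 2 <= k <= d-1, Gd a t = G_d(a;t).\<close>
definition core_eqs ::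
  "nat \<Rightarrow> (nat \<Rightarrow> nat) \<Rightarrow> (nat \<Rightarrow> (nat \<Rightarrow> real) \<Rightarrow> nat \<Rightarrow> real) \<Rightarrow> ((nat \<Rightarrow> real) \<Rightarrow> real) \<Rightarrow>
   (real \<Rightarrow> nat \<Rightarrow> real) \<Rightarrow> (nat \<Rightarrow> nat \<Rightarrow> real \<Rightarrow> nat \<Rightarrow> real) \<Rightarrow> (nat \<Rightarrow> real \<Rightarrow> real) \<Rightarrow> bool" where
  "core_eqs d r \<Phi> p G1 Gm Gd \<longleftrightarrow>
     (\<forall>a\<in>{1..r 1}. AE x in cube {1..1}. G1 (x 1) a = \<Phi> 1 x a) \<and>
     (\<forall>k\<in>{2..d-1}. \<forall>b\<in>{1..r k}. AE x in cube {1..k}.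
        (\<Sum>a\<in>{1..r (k-1)}. \<Phi> (k-1) (restrict x {1..k-1}) a * Gm k a (x k) b) = \<Phi> k x b) \<and>
     (AE x in cube {1..d}.
        (\<Sum>a\<in>{1..r (d-1)}. \<Phi> (d-1) (restrict x {1..d-1}) a * Gd a (x d)) = p x)"

definition cores_agree ::
  "nat \<Rightarrow> (nat \<Rightarrow> nat) \<Rightarrow>
   (real \<Rightarrow> nat \<Rightarrow> real) \<Rightarrow> (nat \<Rightarrow> nat \<Rightarrow> real \<Rightarrow> nat \<Rightarrow> real) \<Rightarrow> (nat \<Rightarrow> real \<Rightarrow> real) \<Rightarrow>
   (real \<Rightarrow> nat \<Rightarrow> real) \<Rightarrow> (nat \<Rightarrow> nat \<Rightarrow> real \<Rightarrow> nat \<Rightarrow> real) \<Rightarrow> (nat \<Rightarrow> real \<Rightarrow> real) \<Rightarrow> bool" where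
  "cores_agree d r G1 Gm Gd G1' Gm' Gd' \<longleftrightarrow>
     (\<forall>a\<in>{1..r 1}. AE t in Imeas. G1' t a = G1 t a) \<and>
     (\<forall>k\<in>{2..d-1}. \<forall>a\<in>{1..r (k-1)}. \<forall>b\<in>{1..r k}. AE t in Imeas. Gm' k a t b = Gm k a t b) \<and>
     (\<forall>a\<in>{1..r (d-1)}. AE t in Imeas. Gd' a t = Gd a t)"

definition tt_eval ::
  "nat \<Rightarrow> (nat \<Rightarrow> nat) \<Rightarrow>
   (real \<Rightarrow> nat \<Rightarrow> real) \<Rightarrow> (nat \<Rightarrow> nat \<Rightarrow> real \<Rightarrow> nat \<Rightarrow> real) \<Rightarrow> (nat \<Rightarrow> real \<Rightarrow> real) \<Rightarrow>
   (nat \<Rightarrow> real) \<Rightarrow> real" where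
  "tt_eval d r G1 Gm Gd x =
     (\<Sum>\<alpha>\<in>PiE {1..d-1} (\<lambda>k. {1..r k}).
        G1 (x 1) (\<alpha> 1) * (\<Prod>k\<in>{2..d-1}. Gm k (\<alpha> (k-1)) (x k) (\<alpha> k)) * Gd (\<alpha> (d-1)) (x d))"

end

theory Submission
  imports Defs
begin

lemma sf_Imeas: "finite_measure Imeas"
  unfolding Imeas_def
  by (intro finite_measureI) (auto simp: emeasure_restrict_space)

lemma psf: "product_sigma_finite (\<lambda>_::nat. Imeas)"
  unfolding product_sigma_finite_def
  using sf_Imeas by (simp add: finite_measure_def)

lemma fpsf: "finite I \<Longrightarrow> finite_product_sigma_finite (\<lambda>_::nat. Imeas) I"
  by (simp add: finite_product_sigma_finite_def finite_product_sigma_finite_axioms_def psf)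

lemma sf_cube: "finite I \<Longrightarrow> sigma_finite_measure (cube I)"
  unfolding cube_def by (rule product_sigma_finite.sigma_finite[OF psf])

lemma psf_cube: "finite I \<Longrightarrow> finite J \<Longrightarrow> pair_sigma_finite (cube I) (cube J)"
  by (simp add: pair_sigma_finite_def sf_cube)

lemma cube_split: "I \<inter> J = {} \<Longrightarrow> finite I \<Longrightarrow> finite J \<Longrightarrow>
  distr (cube I \<Otimes>\<^sub>M cube J) (cube (I \<union> J)) (merge I J) = cube (I \<union> J)"
  unfolding cube_def using product_sigma_finite.distr_merge[OF psf] by blast

lemma AE_split:
  assumes "I \<inter> J = {}" "finite I" "finite J" "K = I \<union> J" "AE x in cube K. P x"
  shows "AE y in cube I. AE z in cube J. P (merge I J (y,z))"
proof -
  interpret pair_sigma_finite "cube I" "cube J" using psf_cube assms by blast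
  have m: "merge I J \<in> measurable (cube I \<Otimes>\<^sub>M cube J) (cube (I \<union> J))"
    unfolding cube_def by (rule measurable_merge)
  have "AE x in cube (I \<union> J). P x" using assms(5) unfolding assms(4) .
  hence "AE x in distr (cube I \<Otimes>\<^sub>M cube J) (cube (I \<union> J)) (merge I J). P x"
    by (subst cube_split[OF assms(1-3)])
  from AE_distrD[OF m this] have "AE x in cube I \<Otimes>\<^sub>M cube J. P (merge I J x)" .
  from AE_pair[OF this] show ?thesis .
qed

lemma restrict_space_cube: "y \<in> space (cube J) \<Longrightarrow> restrict y J = y"
  unfolding cube_def by (simp add: space_PiM PiE_iff extensional_restrict)

lemma AE_up:
  assumes "finite K" "J \<subseteq> K" "AE z in cube J. Q z"
  shows "AE x in cube K. Q (restrict x J)"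
proof -
  define L where "L = K - J"
  have JL: "J \<inter> L = {}" "K = J \<union> L" "finite J" "finite L"
    using assms L_def finite_subset by auto
  from assms(3) obtain N where N: "{x \<in> space (cube J). \<not> Q x} \<subseteq> N" "emeasure (cube J) N = 0" "N \<in> sets (cube J)"
    by (rule AE_E)
  interpret L: sigma_finite_measure "cube L" using sf_cube JL by blast
  have mr: "(\<lambda>x. restrict x J) \<in> measurable (cube K) (cube J)"
    unfolding cube_def using assms(2) by (rule measurable_restrict_subset)
  have mm: "merge J L \<in> measurable (cube J \<Otimes>\<^sub>M cube L) (cube K)"
    unfolding cube_def JL(2) by (rule measurable_merge)
  define S where "S = (\<lambda>x. restrict x J) -` N \<inter> space (cube K)"
  have S: "S \<in> sets (cube K)" unfolding S_def using mr N(3) by measurable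
  have pre: "merge J L -` S \<inter> space (cube J \<Otimes>\<^sub>M cube L) = N \<times> space (cube L)"
  proof (intro set_eqI iffI)
    fix yw assume a: "yw \<in> merge J L -` S \<inter> space (cube J \<Otimes>\<^sub>M cube L)"
    obtain y w where yw: "yw = (y,w)" by fastforce
    have "y \<in> space (cube J)" "w \<in> space (cube L)" using a yw by (auto simp: space_pair_measure)
    then show "yw \<in> N \<times> space (cube L)" using a yw JL(1) restrict_space_cube[of y J]
      by (auto simp: S_def)
  next
    fix yw assume a: "yw \<in> N \<times> space (cube L)"
    obtain y w where yw: "yw = (y,w)" by fastforce
    have y: "y \<in> space (cube J)" using a yw N(3) sets.sets_into_space by auto
    have "merge J L (y,w) \<in> space (cube K)" using measurable_space[OF mm] y a yw
      by (auto simp: space_pair_measure)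
    then show "yw \<in> merge J L -` S \<inter> space (cube J \<Otimes>\<^sub>M cube L)"
      using a yw y JL(1) restrict_space_cube[of y J] by (auto simp: S_def space_pair_measure)
  qed
  have "emeasure (cube K) S = emeasure (distr (cube J \<Otimes>\<^sub>M cube L) (cube K) (merge J L)) S"
    using cube_split[OF JL(1,3,4)] JL(2) by simp
  also have "\<dots> = emeasure (cube J \<Otimes>\<^sub>M cube L) (N \<times> space (cube L))"
    by (subst emeasure_distr[OF mm S]) (simp add: pre)
  also have "\<dots> = 0" using L.times_in_null_sets1[of N "cube J" "space (cube L)"] N
    by (simp add: null_sets_def)
  finally have "S \<in> null_sets (cube K)" using S by (simp add: null_sets_def)
  moreover have "{x \<in> space (cube K). \<not> Q (restrict x J)} \<subseteq> S"
    using N(1) measurable_space[OF mr] by (auto simp: S_def)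
  ultimately show ?thesis by (rule AE_I')
qed

lemma space_Imeas: "space Imeas = {-1..1}"
  unfolding Imeas_def by simp

lemma space_cube1: "z \<in> space (cube {k}) \<Longrightarrow> z = (\<lambda>_. undefined)(k := z k)"
  unfolding cube_def by (auto simp: space_PiM PiE_iff extensional_def fun_eq_iff)

lemma AE_single:
  assumes "AE z in cube {k}. Q (z k)"
  shows "AE t in Imeas. Q t"
proof -
  from assms obtain N where N: "{x \<in> space (cube {k}). \<not> Q (x k)} \<subseteq> N" "emeasure (cube {k}) N = 0" "N \<in> sets (cube {k})"
    by (rule AE_E)
  have mu: "(\<lambda>t. (\<lambda>_. undefined)(k := t)) \<in> measurable Imeas (cube {k})"
    unfolding cube_def
    using measurable_component_update[of "\<lambda>_. undefined" "{}" "\<lambda>_. Imeas" k]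
    by (simp add: space_PiM)
  have mp: "(\<lambda>x. x k) \<in> measurable (cube {k}) Imeas"
    unfolding cube_def by (rule measurable_component_singleton) simp
  define N' where "N' = (\<lambda>t. (\<lambda>_. undefined)(k := t)) -` N \<inter> space Imeas"
  have N'm: "N' \<in> sets Imeas" unfolding N'_def using mu N(3) by measurable
  have D: "distr (cube {k}) Imeas (\<lambda>x. x k) = Imeas"
    unfolding cube_def by (rule product_sigma_finite.distr_singleton[OF psf])
  have pre: "(\<lambda>x. x k) -` N' \<inter> space (cube {k}) = N"
  proof (intro set_eqI iffI)
    fix z assume "z \<in> (\<lambda>x. x k) -` N' \<inter> space (cube {k})"
    then show "z \<in> N" using space_cube1[of z k] by (auto simp: N'_def)
  next
    fix z assume z: "z \<in> N"
    then have zs: "z \<in> space (cube {k})" using N(3) sets.sets_into_space by auto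
    then have "z k \<in> space Imeas" using measurable_space[OF mp] by auto
    then show "z \<in> (\<lambda>x. x k) -` N' \<inter> space (cube {k})"
      using zs z space_cube1[of z k] by (auto simp: N'_def)
  qed
  have "emeasure Imeas N' = emeasure (distr (cube {k}) Imeas (\<lambda>x. x k)) N'" using D by simp
  also have "\<dots> = 0" by (subst emeasure_distr[OF mp N'm]) (simp add: pre N(2))
  finally have "N' \<in> null_sets Imeas" using N'm by (simp add: null_sets_def)
  moreover have "{t \<in> space Imeas. \<not> Q t} \<subseteq> N'"
  proof
    fix t assume t: "t \<in> {t \<in> space Imeas. \<not> Q t}"
    then have "(\<lambda>_. undefined)(k := t) \<in> space (cube {k})" using measurable_space[OF mu] by auto
    then show "t \<in> N'" using t N(1) by (auto simp: N'_def)
  qed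
  ultimately show ?thesis by (rule AE_I')
qed

lemma AE_int_section:
  fixes f :: "(nat \<Rightarrow> real) \<Rightarrow> real"
  assumes B: "finite B" and kB0: "k \<notin> B" and fi: "integrable (cube (insert k B)) f"
  shows "AE w in cube {k}. integrable (cube B) (\<lambda>z. f (z(k := w k)))"
proof -
  have fk: "finite {k}" by simp
  interpret pair_sigma_finite "cube {k}" "cube B" by (rule psf_cube[OF fk B])
  have kB: "{k} \<inter> B = {}" "insert k B = {k} \<union> B" using kB0 by auto
  have mm: "merge {k} B \<in> measurable (cube {k} \<Otimes>\<^sub>M cube B) (cube ({k} \<union> B))"
    unfolding cube_def by (rule measurable_merge)
  have fi2: "integrable (cube ({k} \<union> B)) f" using fi unfolding kB(2) .
  have fm: "f \<in> borel_measurable (cube ({k} \<union> B))" using fi2 by (rule borel_measurable_integrable)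
  have "integrable (distr (cube {k} \<Otimes>\<^sub>M cube B) (cube ({k} \<union> B)) (merge {k} B)) f"
    unfolding cube_split[OF kB(1) fk B] by (rule fi2)
  then have "integrable (cube {k} \<Otimes>\<^sub>M cube B) (\<lambda>x. f (merge {k} B x))"
    using integrable_distr_eq[OF mm fm] by simp
  from AE_integrable_fst'[OF this]
  have "AE w in cube {k}. integrable (cube B) (\<lambda>z. f (merge {k} B (w, z)))" by simp
  then show ?thesis
  proof (rule eventually_mono)
    fix w assume wi: "integrable (cube B) (\<lambda>z. f (merge {k} B (w, z)))"
    have eq: "\<And>z. z \<in> space (cube B) \<Longrightarrow> f (merge {k} B (w, z)) = f (z(k := w k))"
    proof -
      fix z assume "z \<in> space (cube B)"
      then have "z \<in> extensional B" unfolding cube_def by (simp add: space_PiM PiE_iff)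
      then have "merge {k} B (w, z) = z(k := w k)"
        using kB0 unfolding merge_def extensional_def by (auto simp: fun_eq_iff)
      then show "f (merge {k} B (w, z)) = f (z(k := w k))" by simp
    qed
    show "integrable (cube B) (\<lambda>z. f (z(k := w k)))"
      using Bochner_Integration.integrable_cong[where M="cube B" and N="cube B", OF refl, of "\<lambda>z. f (merge {k} B (w, z))" "\<lambda>z. f (z(k := w k))"] eq wi by blast
  qed
qed

lemma L2prod:
  fixes f g :: "'a \<Rightarrow> real"
  assumes "f \<in> borel_measurable M" "g \<in> borel_measurable M"
    "integrable M (\<lambda>x. (f x)^2)" "integrable M (\<lambda>x. (g x)^2)"
  shows "integrable M (\<lambda>x. f x * g x)"
proof (rule Bochner_Integration.integrable_bound)
  show "integrable M (\<lambda>x. (f x)^2 + (g x)^2)" using assms by simp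
  show "(\<lambda>x. f x * g x) \<in> borel_measurable M" using assms by simp
  show "AE x in M. norm (f x * g x) \<le> norm ((f x)^2 + (g x)^2)"
  proof (rule AE_I2)
    fix x
    have "2 * \<bar>f x * g x\<bar> \<le> (f x)^2 + (g x)^2"
      using sum_squares_bound[of "\<bar>f x\<bar>" "\<bar>g x\<bar>"] by (simp add: abs_mult power2_eq_square)
    moreover have "0 \<le> \<bar>f x * g x\<bar>" by simp
    ultimately show "norm (f x * g x) \<le> norm ((f x)^2 + (g x)^2)" by simp
  qed
qed

lemma ON_prod_int:
  assumes "orthonormal_L2 M r \<Phi>" "a \<in> {1..r}" "b \<in> {1..r}"
  shows "integrable M (\<lambda>x. \<Phi> x a * \<Phi> x b)"
  using assms unfolding orthonormal_L2_def by (intro L2prod) auto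

lemma ORTH:
  assumes on: "orthonormal_L2 M r \<Phi>" and ae: "AE y in M. (\<Sum>a\<in>{1..r}. c a * \<Phi> y a) = 0"
    and b: "b \<in> {1..r}"
  shows "c b = 0"
proof -
  have meas: "\<And>a. a \<in> {1..r} \<Longrightarrow> (\<lambda>x. \<Phi> x a) \<in> borel_measurable M"
    using on unfolding orthonormal_L2_def by auto
  have "(\<integral>y. (\<Sum>a\<in>{1..r}. c a * \<Phi> y a) * \<Phi> y b \<partial>M) = (\<integral>y. 0 \<partial>M)"
    using ae meas b by (intro integral_cong_AE) auto
  moreover have "(\<integral>y. (\<Sum>a\<in>{1..r}. c a * \<Phi> y a) * \<Phi> y b \<partial>M)
      = (\<integral>y. (\<Sum>a\<in>{1..r}. c a * (\<Phi> y a * \<Phi> y b)) \<partial>M)"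
    by (simp add: sum_distrib_right mult.assoc)
  moreover have "\<dots> = (\<Sum>a\<in>{1..r}. (\<integral>y. c a * (\<Phi> y a * \<Phi> y b) \<partial>M))"
    using Bochner_Integration.integral_sum[where I="{1..r}" and M=M and f="\<lambda>a y. c a * (\<Phi> y a * \<Phi> y b)"] ON_prod_int[OF on _ b] by auto
  moreover have "\<dots> = (\<Sum>a\<in>{1..r}. (if a = b then c a else 0))"
    using on b unfolding orthonormal_L2_def by (intro sum.cong) auto
  moreover have "\<dots> = c b" using b by simp
  ultimately show ?thesis by simp
qed

lemma sum_PiE_insert:
  assumes "m \<notin> S"
  shows "(\<Sum>\<alpha>\<in>PiE (insert m S) R. f \<alpha>) = (\<Sum>a\<in>R m. \<Sum>\<beta>\<in>PiE S R. f (\<beta>(m := a)))"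
proof -
  have "(\<Sum>\<alpha>\<in>PiE (insert m S) R. f \<alpha>) = (\<Sum>\<alpha>\<in>(\<lambda>(y, g). g(m := y)) ` (R m \<times> PiE S R). f \<alpha>)"
    unfolding PiE_insert_eq ..
  also have "\<dots> = (\<Sum>yg\<in>R m \<times> PiE S R. f ((\<lambda>(y, g). g(m := y)) yg))"
    using sum.reindex[OF inj_combinator[OF assms], of f] unfolding comp_def .
  also have "\<dots> = (\<Sum>(y,g)\<in>R m \<times> PiE S R. f (g(m := y)))"
    by (simp add: case_prod_unfold)
  also have "\<dots> = (\<Sum>a\<in>R m. \<Sum>\<beta>\<in>PiE S R. f (\<beta>(m := a)))"
    by (rule sum.cartesian_product[symmetric])
  finally show ?thesis .
qed


primrec Wf :: "(real \<Rightarrow> nat \<Rightarrow> real) \<Rightarrow> (nat \<Rightarrow> nat \<Rightarrow> real \<Rightarrow> nat \<Rightarrow> real) \<Rightarrow> (nat \<Rightarrow> nat) \<Rightarrow> (nat \<Rightarrow> real) \<Rightarrow> nat \<Rightarrow> nat \<Rightarrow> real" where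
  "Wf G1 Gm r x 0 b = G1 (x 1) b"
| "Wf G1 Gm r x (Suc m) b = (\<Sum>a\<in>{1..r (Suc m)}. Wf G1 Gm r x m a * Gm (Suc (Suc m)) a (x (Suc (Suc m))) b)"

definition Pf :: "(real \<Rightarrow> nat \<Rightarrow> real) \<Rightarrow> (nat \<Rightarrow> nat \<Rightarrow> real \<Rightarrow> nat \<Rightarrow> real) \<Rightarrow> (nat \<Rightarrow> real) \<Rightarrow> nat \<Rightarrow> (nat \<Rightarrow> nat) \<Rightarrow> real" where
  "Pf G1 Gm x n \<alpha> = G1 (x 1) (\<alpha> 1) * (\<Prod>k\<in>{2..n}. Gm k (\<alpha> (k-1)) (x k) (\<alpha> k))"

lemma Pf_step:
  "Pf G1 Gm x (Suc (Suc m)) (\<gamma>(Suc (Suc m) := b)) = Pf G1 Gm x (Suc m) \<gamma> * Gm (Suc (Suc m)) (\<gamma> (Suc m)) (x (Suc (Suc m))) b"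
proof -
  have "(\<Prod>k\<in>{2..Suc (Suc m)}. Gm k ((\<gamma>(Suc (Suc m) := b)) (k-1)) (x k) ((\<gamma>(Suc (Suc m) := b)) k))
     = Gm (Suc (Suc m)) (\<gamma> (Suc m)) (x (Suc (Suc m))) b * (\<Prod>k\<in>{2..Suc m}. Gm k ((\<gamma>(Suc (Suc m) := b)) (k-1)) (x k) ((\<gamma>(Suc (Suc m) := b)) k))"
    by (subst prod.nat_ivl_Suc') auto
  also have "(\<Prod>k\<in>{2..Suc m}. Gm k ((\<gamma>(Suc (Suc m) := b)) (k-1)) (x k) ((\<gamma>(Suc (Suc m) := b)) k))
     = (\<Prod>k\<in>{2..Suc m}. Gm k (\<gamma> (k-1)) (x k) (\<gamma> k))"
    by (intro prod.cong) auto
  finally show ?thesis unfolding Pf_def by simp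
qed

lemma Wf_eq: "Wf G1 Gm r x m b = (\<Sum>\<alpha>\<in>PiE {1..m} (\<lambda>k. {1..r k}). Pf G1 Gm x (Suc m) (\<alpha>(Suc m := b)))"
proof (induction m arbitrary: b)
  case 0
  then show ?case by (simp add: Pf_def)
next
  case (Suc m)
  have eqset: "{1..Suc m} = insert (Suc m) {1..m}" by auto
  have "Wf G1 Gm r x (Suc m) b = (\<Sum>a\<in>{1..r (Suc m)}. Wf G1 Gm r x m a * Gm (Suc (Suc m)) a (x (Suc (Suc m))) b)"
    by simp
  also have "\<dots> = (\<Sum>a\<in>{1..r (Suc m)}. \<Sum>\<beta>\<in>PiE {1..m} (\<lambda>k. {1..r k}). Pf G1 Gm x (Suc (Suc m)) (\<beta>(Suc m := a, Suc (Suc m) := b)))"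
    unfolding Suc.IH by (simp add: Pf_step sum_distrib_right)
  also have "\<dots> = (\<Sum>\<alpha>\<in>PiE {1..Suc m} (\<lambda>k. {1..r k}). Pf G1 Gm x (Suc (Suc m)) (\<alpha>(Suc (Suc m) := b)))"
    by (subst eqset, rule sum_PiE_insert[symmetric]) simp
  finally show ?case .
qed

lemma tt_Wf:
  assumes "2 \<le> d"
  shows "tt_eval d r G1 Gm Gd x = (\<Sum>a\<in>{1..r (d-1)}. Wf G1 Gm r x (d-2) a * Gd a (x d))"
proof -
  obtain n where n: "d = Suc (Suc n)" using assms by (metis add_2_eq_Suc le_iff_add)
  have eqset: "{1..Suc n} = insert (Suc n) {1..n}" by auto
  have "tt_eval d r G1 Gm Gd x = (\<Sum>\<alpha>\<in>PiE {1..Suc n} (\<lambda>k. {1..r k}). Pf G1 Gm x (Suc n) \<alpha> * Gd (\<alpha> (Suc n)) (x d))"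
    unfolding tt_eval_def Pf_def n by simp
  also have "\<dots> = (\<Sum>a\<in>{1..r (Suc n)}. \<Sum>\<beta>\<in>PiE {1..n} (\<lambda>k. {1..r k}). Pf G1 Gm x (Suc n) (\<beta>(Suc n := a)) * Gd ((\<beta>(Suc n := a)) (Suc n)) (x d))"
    by (subst eqset, rule sum_PiE_insert) simp
  also have "\<dots> = (\<Sum>a\<in>{1..r (d-1)}. Wf G1 Gm r x (d-2) a * Gd a (x d))"
    unfolding Wf_eq n by (simp add: sum_distrib_right)
  finally show ?thesis .
qed

lemma int_lincomb:
  fixes f :: "nat \<Rightarrow> 'a \<Rightarrow> real"
  assumes "\<And>a. a \<in> S \<Longrightarrow> integrable M (f a)"
  shows "(\<integral>x. (\<Sum>a\<in>S. c a * f a x) \<partial>M) = (\<Sum>a\<in>S. c a * (\<integral>x. f a x \<partial>M))"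
  using Bochner_Integration.integral_sum[where I=S and M=M and f="\<lambda>a x. c a * f a x"] assms
  by simp

lemma UNIQ:
  assumes k: "2 \<le> k" and on: "orthonormal_L2 (cube {1..k-1}) r \<Phi>"
    and ae: "AE x in cube {1..k}. (\<Sum>a\<in>{1..r}. \<Phi> (restrict x {1..k-1}) a * D a (x k)) = 0"
    and a: "a \<in> {1..r}"
  shows "AE t in Imeas. D a t = 0"
proof -
  have sets: "{k} \<inter> {1..k-1} = {}" "finite {k}" "finite {1..k-1}" "{1..k} = {k} \<union> {1..k-1}"
    using k by auto
  from AE_split[OF sets ae]
  have "AE w in cube {k}. AE y in cube {1..k-1}.
     (\<Sum>a\<in>{1..r}. \<Phi> (restrict (merge {k} {1..k-1} (w,y)) {1..k-1}) a * D a (merge {k} {1..k-1} (w,y) k)) = 0" .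
  then have "AE w in cube {k}. D a (w k) = 0"
  proof (rule eventually_mono)
    fix w assume h: "AE y in cube {1..k-1}.
     (\<Sum>a\<in>{1..r}. \<Phi> (restrict (merge {k} {1..k-1} (w,y)) {1..k-1}) a * D a (merge {k} {1..k-1} (w,y) k)) = 0"
    have "AE y in cube {1..k-1}. (\<Sum>a\<in>{1..r}. D a (w k) * \<Phi> y a) = 0"
      using h AE_space
    proof eventually_elim
      case (elim y)
      then show ?case using sets(1) restrict_space_cube[of y "{1..k-1}"]
        by (simp add: mult.commute)
    qed
    from ORTH[OF on this a] show "D a (w k) = 0" .
  qed
  then show ?thesis by (rule AE_single)
qed

lemma space_cube_mem: "y \<in> space (cube A) \<Longrightarrow> k \<in> A \<Longrightarrow> y k \<in> space Imeas"
  unfolding cube_def by (auto simp: space_PiM PiE_iff)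

lemma space_cube_ext: "y \<in> space (cube A) \<Longrightarrow> y \<in> extensional A"
  unfolding cube_def by (auto simp: space_PiM PiE_iff)

lemma EX_Gm:
  assumes k: "2 \<le> k" "k < d"
  and on1: "orthonormal_L2 (cube {1..k-1}) r1 \<Phi>1" and onP1: "orthonormal_L2 (cube {k..d}) r1 \<Psi>1"
  and dec1: "AE x in cube {1..d}. p x = (\<Sum>a\<in>{1..r1}. \<sigma>1 a * \<Phi>1 (restrict x {1..k-1}) a * \<Psi>1 (restrict x {k..d}) a)"
  and s2: "\<forall>a\<in>{1..r2}. 0 < \<sigma>2 a" and onP2: "orthonormal_L2 (cube {Suc k..d}) r2 \<Psi>2"
  and dec2: "AE x in cube {1..d}. p x = (\<Sum>a\<in>{1..r2}. \<sigma>2 a * \<Phi>2 (restrict x {1..k}) a * \<Psi>2 (restrict x {Suc k..d}) a)"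
  and b: "b \<in> {1..r2}"
  shows "AE y in cube {1..k}. (\<Sum>a\<in>{1..r1}. \<Phi>1 (restrict y {1..k-1}) a *
            (\<sigma>1 a / \<sigma>2 b * (\<integral>z. \<Psi>1 (z(k := y k)) a * \<Psi>2 z b \<partial>cube {Suc k..d}))) = \<Phi>2 y b"
proof -
  define A where "A = {1..k}"
  define B where "B = {Suc k..d}"
  have sets: "A \<inter> B = {}" "finite A" "finite B" "{1..d} = A \<union> B" "k \<in> A" "k \<notin> B"
    "{k..d} = insert k B" "{1..k-1} \<subseteq> A" "{k..d} = B \<union> {k}"
    using k by (auto simp: A_def B_def)
  have E: "AE x in cube {1..d}. (\<Sum>a\<in>{1..r1}. \<sigma>1 a * \<Phi>1 (restrict x {1..k-1}) a * \<Psi>1 (restrict x {k..d}) a)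
      = (\<Sum>a\<in>{1..r2}. \<sigma>2 a * \<Phi>2 (restrict x A) a * \<Psi>2 (restrict x B) a)"
    using dec1 dec2 unfolding A_def B_def by eventually_elim simp
  from AE_split[OF sets(1-3) sets(4) E]
  have E2: "AE y in cube A. AE z in cube B.
     (\<Sum>a\<in>{1..r1}. \<sigma>1 a * \<Phi>1 (restrict (merge A B (y,z)) {1..k-1}) a * \<Psi>1 (restrict (merge A B (y,z)) {k..d}) a)
      = (\<Sum>a\<in>{1..r2}. \<sigma>2 a * \<Phi>2 (restrict (merge A B (y,z)) A) a * \<Psi>2 (restrict (merge A B (y,z)) B) a)" .
  have INT: "AE y in cube A. \<forall>a\<in>{1..r1}. integrable (cube B) (\<lambda>z. (\<Psi>1 (z(k := y k)) a)^2)"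
  proof (rule AE_finite_allI)
    fix a assume a: "a \<in> {1..r1}"
    have "integrable (cube (insert k B)) (\<lambda>x. (\<Psi>1 x a)^2)"
      using onP1 a unfolding orthonormal_L2_def sets(7) by auto
    from AE_int_section[OF sets(3,6) this]
    have "AE w in cube {k}. integrable (cube B) (\<lambda>z. (\<Psi>1 (z(k := w k)) a)^2)" .
    from AE_up[OF sets(2) _ this] sets(5)
    show "AE y in cube A. integrable (cube B) (\<lambda>z. (\<Psi>1 (z(k := y k)) a)^2)" by simp
  qed simp
  have mP1: "\<And>a. a \<in> {1..r1} \<Longrightarrow> (\<lambda>x. \<Psi>1 x a) \<in> borel_measurable (cube {k..d})"
    using onP1 unfolding orthonormal_L2_def by auto
  have mP2: "\<And>a. a \<in> {1..r2} \<Longrightarrow> (\<lambda>x. \<Psi>2 x a) \<in> borel_measurable (cube B)"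
    using onP2 unfolding orthonormal_L2_def B_def by auto
  have iP2: "\<And>a. a \<in> {1..r2} \<Longrightarrow> integrable (cube B) (\<lambda>x. (\<Psi>2 x a)^2)"
    using onP2 unfolding orthonormal_L2_def B_def by auto
  have oP2: "\<And>a c. a \<in> {1..r2} \<Longrightarrow> c \<in> {1..r2} \<Longrightarrow> (\<integral>x. \<Psi>2 x a * \<Psi>2 x c \<partial>cube B) = (if a = c then 1 else 0)"
    using onP2 unfolding orthonormal_L2_def B_def by auto
  show ?thesis
    unfolding A_def[symmetric] B_def[symmetric]
    using E2 INT AE_space
  proof eventually_elim
    case (elim y)
    note hE = elim(1) and hI = elim(2) and hy = elim(3)
    have yk: "y k \<in> space Imeas" using space_cube_mem[OF hy sets(5)] .
    have mu: "(\<lambda>z. z(k := y k)) \<in> measurable (cube B) (cube {k..d})"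
      unfolding cube_def
      by (rule measurable_fun_upd[OF sets(9)]) (auto intro: measurable_ident_sets measurable_const[OF yk])
    have mQ: "\<And>a. a \<in> {1..r1} \<Longrightarrow> (\<lambda>z. \<Psi>1 (z(k := y k)) a) \<in> borel_measurable (cube B)"
      using measurable_compose[OF mu mP1] by blast
    define c1 where "c1 a = \<sigma>1 a * \<Phi>1 (restrict y {1..k-1}) a" for a
    define c2 where "c2 a = \<sigma>2 a * \<Phi>2 y a" for a
    have hE': "AE z in cube B. (\<Sum>a\<in>{1..r1}. c1 a * \<Psi>1 (z(k := y k)) a) = (\<Sum>a\<in>{1..r2}. c2 a * \<Psi>2 z a)"
      using hE AE_space
    proof eventually_elim
      case (elim z)
      have ze: "z \<in> extensional B" using space_cube_ext[OF elim(2)] .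
      have r1: "restrict (merge A B (y,z)) {1..k-1} = restrict y {1..k-1}"
        using sets(8) by (auto simp: restrict_def merge_def fun_eq_iff)
      have r2: "restrict (merge A B (y,z)) {k..d} = z(k := y k)"
        using ze sets(5,6) k unfolding A_def B_def
        by (auto simp: restrict_def merge_def fun_eq_iff extensional_def)
      have r3: "restrict (merge A B (y,z)) A = y"
        using sets(1) restrict_space_cube[OF hy] by simp
      have r4: "restrict (merge A B (y,z)) B = z"
        using sets(1) restrict_space_cube[OF elim(2)] by simp
      show ?case using elim(1) unfolding r1 r2 r3 r4 c1_def c2_def by (simp add: mult.assoc)
    qed
    have int1: "\<And>a. a \<in> {1..r1} \<Longrightarrow> integrable (cube B) (\<lambda>z. \<Psi>1 (z(k := y k)) a * \<Psi>2 z b)"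
      using hI mQ mP2[OF b] iP2[OF b] by (intro L2prod) auto
    have int2: "\<And>a. a \<in> {1..r2} \<Longrightarrow> integrable (cube B) (\<lambda>z. \<Psi>2 z a * \<Psi>2 z b)"
      using mP2 iP2 b by (intro L2prod) auto
    have "(\<integral>z. (\<Sum>a\<in>{1..r1}. c1 a * (\<Psi>1 (z(k := y k)) a * \<Psi>2 z b)) \<partial>cube B)
        = (\<integral>z. (\<Sum>a\<in>{1..r2}. c2 a * (\<Psi>2 z a * \<Psi>2 z b)) \<partial>cube B)"
    proof (rule integral_cong_AE)
      show "(\<lambda>z. \<Sum>a\<in>{1..r1}. c1 a * (\<Psi>1 (z(k := y k)) a * \<Psi>2 z b)) \<in> borel_measurable (cube B)"
        using mQ mP2[OF b] by (intro borel_measurable_sum borel_measurable_times) auto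
      show "(\<lambda>z. \<Sum>a\<in>{1..r2}. c2 a * (\<Psi>2 z a * \<Psi>2 z b)) \<in> borel_measurable (cube B)"
        using mP2 b by (intro borel_measurable_sum borel_measurable_times) auto
      show "AE z in cube B. (\<Sum>a\<in>{1..r1}. c1 a * (\<Psi>1 (z(k := y k)) a * \<Psi>2 z b))
          = (\<Sum>a\<in>{1..r2}. c2 a * (\<Psi>2 z a * \<Psi>2 z b))"
        using hE' by eventually_elim (simp add: sum_distrib_right[symmetric] mult.assoc[symmetric])
    qed
    also have "\<dots> = (\<Sum>a\<in>{1..r2}. c2 a * (\<integral>z. \<Psi>2 z a * \<Psi>2 z b \<partial>cube B))"
      using int2 by (rule int_lincomb)
    also have "\<dots> = (\<Sum>a\<in>{1..r2}. if a = b then c2 a else 0)"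
      using oP2 b by (intro sum.cong) auto
    also have "\<dots> = c2 b" using b by simp
    finally have key: "(\<Sum>a\<in>{1..r1}. c1 a * (\<integral>z. \<Psi>1 (z(k := y k)) a * \<Psi>2 z b \<partial>cube B)) = c2 b"
      using int_lincomb[of "{1..r1}" "cube B" "\<lambda>a z. \<Psi>1 (z(k := y k)) a * \<Psi>2 z b" c1] int1 by simp
    have sb: "0 < \<sigma>2 b" using s2 b by auto
    have "(\<Sum>a\<in>{1..r1}. \<Phi>1 (restrict y {1..k-1}) a * (\<sigma>1 a / \<sigma>2 b * (\<integral>z. \<Psi>1 (z(k := y k)) a * \<Psi>2 z b \<partial>cube B)))
        = (\<Sum>a\<in>{1..r1}. c1 a * (\<integral>z. \<Psi>1 (z(k := y k)) a * \<Psi>2 z b \<partial>cube B)) / \<sigma>2 b"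
      unfolding sum_divide_distrib c1_def by (intro sum.cong) auto
    also have "\<dots> = \<Phi>2 y b" using key sb unfolding c2_def by simp
    finally show ?case .
  qed
qed

theorem proposition1:
  fixes d :: nat and p :: "(nat \<Rightarrow> real) \<Rightarrow> real" and r :: "nat \<Rightarrow> nat"
    and \<Phi> :: "nat \<Rightarrow> (nat \<Rightarrow> real) \<Rightarrow> nat \<Rightarrow> real"
  assumes "2 \<le> d"
    and "probability_density d p"
    and "integrable (cube {1..d}) (\<lambda>x. (p x)^2)"
    and "\<forall>k\<in>{1..d-1}. left_singular_vectors d p k (r k) (\<Phi> k)"
  shows "\<exists>G1 Gm Gd.
           core_eqs d r \<Phi> p G1 Gm Gd \<and>
           (\<forall>G1' Gm' Gd'. core_eqs d r \<Phi> p G1' Gm' Gd' \<longrightarrow> cores_agree d r G1 Gm Gd G1' Gm' Gd') \<and>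
           (AE x in cube {1..d}. p x = tt_eval d r G1 Gm Gd x)"
proof -
  have d: "2 \<le> d" by fact
  have "\<forall>k\<in>{1..d-1}. \<exists>sP. (\<forall>a\<in>{1..r k}. 0 < fst sP a) \<and>
        orthonormal_L2 (cube {1..k}) (r k) (\<Phi> k) \<and>
        orthonormal_L2 (cube {Suc k..d}) (r k) (snd sP) \<and>
        (AE x in cube {1..d}. p x =
            (\<Sum>a\<in>{1..r k}. fst sP a * \<Phi> k (restrict x {1..k}) a * snd sP (restrict x {Suc k..d}) a))"
  proof
    fix k assume "k \<in> {1..d-1}"
    then obtain \<sigma> \<Psi> where "(\<forall>a\<in>{1..r k}. 0 < \<sigma> a) \<and>
        orthonormal_L2 (cube {1..k}) (r k) (\<Phi> k) \<and>
        orthonormal_L2 (cube {Suc k..d}) (r k) \<Psi> \<and>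
        (AE x in cube {1..d}. p x =
            (\<Sum>a\<in>{1..r k}. \<sigma> a * \<Phi> k (restrict x {1..k}) a * \<Psi> (restrict x {Suc k..d}) a))"
      using assms(4) unfolding left_singular_vectors_def by blast
    then show "\<exists>sP. (\<forall>a\<in>{1..r k}. 0 < fst sP a) \<and>
        orthonormal_L2 (cube {1..k}) (r k) (\<Phi> k) \<and>
        orthonormal_L2 (cube {Suc k..d}) (r k) (snd sP) \<and>
        (AE x in cube {1..d}. p x =
            (\<Sum>a\<in>{1..r k}. fst sP a * \<Phi> k (restrict x {1..k}) a * snd sP (restrict x {Suc k..d}) a))"
      by (intro exI[of _ "(\<sigma>, \<Psi>)"]) simp
  qed
  then obtain SP where SP: "\<forall>k\<in>{1..d-1}. (\<forall>a\<in>{1..r k}. 0 < fst (SP k) a) \<and>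
        orthonormal_L2 (cube {1..k}) (r k) (\<Phi> k) \<and>
        orthonormal_L2 (cube {Suc k..d}) (r k) (snd (SP k)) \<and>
        (AE x in cube {1..d}. p x =
            (\<Sum>a\<in>{1..r k}. fst (SP k) a * \<Phi> k (restrict x {1..k}) a * snd (SP k) (restrict x {Suc k..d}) a))"
    by (rule bchoice_iff[THEN iffD1, THEN exE]) blast
  define sig where "sig k = fst (SP k)" for k
  define Psi where "Psi k = snd (SP k)" for k
  have pos: "\<And>k a. k \<in> {1..d-1} \<Longrightarrow> a \<in> {1..r k} \<Longrightarrow> 0 < sig k a"
    using SP unfolding sig_def by blast
  have on: "\<And>k. k \<in> {1..d-1} \<Longrightarrow> orthonormal_L2 (cube {1..k}) (r k) (\<Phi> k)"
    using SP by blast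
  have onP: "\<And>k. k \<in> {1..d-1} \<Longrightarrow> orthonormal_L2 (cube {Suc k..d}) (r k) (Psi k)"
    using SP unfolding Psi_def by blast
  have dec: "\<And>k. k \<in> {1..d-1} \<Longrightarrow> AE x in cube {1..d}. p x =
            (\<Sum>a\<in>{1..r k}. sig k a * \<Phi> k (restrict x {1..k}) a * Psi k (restrict x {Suc k..d}) a)"
    using SP unfolding sig_def Psi_def by blast

  define G1 where "G1 t a = \<Phi> 1 ((\<lambda>_. undefined)(1 := t)) a" for t a
  define Gm where "Gm k a t b = sig (k-1) a / sig k b * (\<integral>z. Psi (k-1) (z(k := t)) a * Psi k z b \<partial>cube {Suc k..d})"
    for k a t b
  define Gd where "Gd a t = sig (d-1) a * Psi (d-1) ((\<lambda>_. undefined)(d := t)) a" for a t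

  have CE1: "\<forall>a\<in>{1..r 1}. AE x in cube {1..1}. G1 (x 1) a = \<Phi> 1 x a"
  proof
    fix a
    show "AE x in cube {1..1}. G1 (x 1) a = \<Phi> 1 x a"
      using AE_space
    proof eventually_elim
      case (elim x)
      then show ?case using space_cube1[of x 1] unfolding G1_def by simp
    qed
  qed
  have CE2: "\<forall>k\<in>{2..d-1}. \<forall>b\<in>{1..r k}. AE x in cube {1..k}.
        (\<Sum>a\<in>{1..r (k-1)}. \<Phi> (k-1) (restrict x {1..k-1}) a * Gm k a (x k) b) = \<Phi> k x b"
  proof (intro ballI)
    fix k b assume k: "k \<in> {2..d-1}" and b: "b \<in> {1..r k}"
    have k1: "k - 1 \<in> {1..d-1}" "k \<in> {1..d-1}" "Suc (k-1) = k" using k by auto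
    show "AE x in cube {1..k}.
        (\<Sum>a\<in>{1..r (k-1)}. \<Phi> (k-1) (restrict x {1..k-1}) a * Gm k a (x k) b) = \<Phi> k x b"
      unfolding Gm_def
    proof (rule EX_Gm)
      show "2 \<le> k" "k < d" using k d by auto
      show "orthonormal_L2 (cube {1..k-1}) (r (k-1)) (\<Phi> (k-1))" using on[OF k1(1)] .
      show "orthonormal_L2 (cube {k..d}) (r (k-1)) (Psi (k-1))" using onP[OF k1(1)] k1(3) by simp
      show "AE x in cube {1..d}. p x = (\<Sum>a\<in>{1..r (k-1)}. sig (k-1) a * \<Phi> (k-1) (restrict x {1..k-1}) a * Psi (k-1) (restrict x {k..d}) a)"
        using dec[OF k1(1)] k1(3) by simp
      show "\<forall>a\<in>{1..r k}. 0 < sig k a" using pos[OF k1(2)] by blast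
      show "orthonormal_L2 (cube {Suc k..d}) (r k) (Psi k)" using onP[OF k1(2)] .
      show "AE x in cube {1..d}. p x = (\<Sum>a\<in>{1..r k}. sig k a * \<Phi> k (restrict x {1..k}) a * Psi k (restrict x {Suc k..d}) a)"
        using dec[OF k1(2)] .
      show "b \<in> {1..r k}" by fact
    qed
  qed
  have CE3: "AE x in cube {1..d}. (\<Sum>a\<in>{1..r (d-1)}. \<Phi> (d-1) (restrict x {1..d-1}) a * Gd a (x d)) = p x"
  proof -
    have k1: "d - 1 \<in> {1..d-1}" "Suc (d-1) = d" using d by auto
    have rd: "\<And>x. restrict x {d..d} = (\<lambda>_. undefined)(d := x d)"
      by (auto simp: restrict_def fun_eq_iff)
    show ?thesis using dec[OF k1(1)]
    proof eventually_elim
      case (elim x)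
      then show ?case unfolding k1(2) rd Gd_def by (simp add: ac_simps)
    qed
  qed
  have CE: "core_eqs d r \<Phi> p G1 Gm Gd"
    unfolding core_eqs_def using CE1 CE2 CE3 by blast

  have UQ: "cores_agree d r G1 Gm Gd G1' Gm' Gd'" if CE': "core_eqs d r \<Phi> p G1' Gm' Gd'" for G1' Gm' Gd'
  proof -
    note C' = CE'[unfolded core_eqs_def]
    have U1: "\<forall>a\<in>{1..r 1}. AE t in Imeas. G1' t a = G1 t a"
    proof
      fix a assume a: "a \<in> {1..r 1}"
      have "AE x in cube {1..1}. G1' (x 1) a = G1 (x 1) a"
        using bspec[OF CE1 a] bspec[OF conjunct1[OF C'] a] by eventually_elim simp
      moreover have "{1..1::nat} = {1}" by auto
      ultimately have "AE x in cube {1}. G1' (x 1) a = G1 (x 1) a" by metis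
      then show "AE t in Imeas. G1' t a = G1 t a" by (rule AE_single)
    qed
    have U2: "\<forall>k\<in>{2..d-1}. \<forall>a\<in>{1..r (k-1)}. \<forall>b\<in>{1..r k}. AE t in Imeas. Gm' k a t b = Gm k a t b"
    proof (intro ballI)
      fix k a b assume k: "k \<in> {2..d-1}" and a: "a \<in> {1..r (k-1)}" and b: "b \<in> {1..r k}"
      have k1: "k - 1 \<in> {1..d-1}" "2 \<le> k" using k by auto
      have "AE x in cube {1..k}. (\<Sum>a\<in>{1..r (k-1)}. \<Phi> (k-1) (restrict x {1..k-1}) a * (Gm' k a (x k) b - Gm k a (x k) b)) = 0"
        using bspec[OF bspec[OF CE2 k] b] bspec[OF bspec[OF conjunct1[OF conjunct2[OF C']] k] b]
        by eventually_elim (simp add: right_diff_distrib sum_subtractf)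
      from UNIQ[OF k1(2) on[OF k1(1)] this a]
      show "AE t in Imeas. Gm' k a t b = Gm k a t b" by simp
    qed
    have U3: "\<forall>a\<in>{1..r (d-1)}. AE t in Imeas. Gd' a t = Gd a t"
    proof
      fix a assume a: "a \<in> {1..r (d-1)}"
      have k1: "d - 1 \<in> {1..d-1}" using d by auto
      have "AE x in cube {1..d}. (\<Sum>a\<in>{1..r (d-1)}. \<Phi> (d-1) (restrict x {1..d-1}) a * (Gd' a (x d) - Gd a (x d))) = 0"
        using CE3 conjunct2[OF conjunct2[OF C']]
        by eventually_elim (simp add: right_diff_distrib sum_subtractf)
      from UNIQ[OF d on[OF k1] this a]
      show "AE t in Imeas. Gd' a t = Gd a t" by simp
    qed
    show ?thesis unfolding cores_agree_def using U1 U2 U3 by blast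
  qed

  have claim: "Suc m \<le> d - 1 \<Longrightarrow> AE x in cube {1..d}. \<forall>b\<in>{1..r (Suc m)}. \<Phi> (Suc m) (restrict x {1..Suc m}) b = Wf G1 Gm r x m b" for m
  proof (induction m)
    case 0
    show ?case
    proof (rule AE_finite_allI)
      fix b assume b: "b \<in> {1..r (Suc 0)}"
      have "AE y in cube {1..1}. G1 (y 1) b = \<Phi> 1 y b" using CE1 b by simp
      from AE_up[OF _ _ this, of "{1..d}"] d
      have "AE x in cube {1..d}. G1 (restrict x {1..1} 1) b = \<Phi> 1 (restrict x {1..1}) b" by simp
      then show "AE x in cube {1..d}. \<Phi> (Suc 0) (restrict x {1..Suc 0}) b = Wf G1 Gm r x 0 b"
        by eventually_elim simp
    qed simp
  next
    case (Suc m)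
    have IH: "AE x in cube {1..d}. \<forall>b\<in>{1..r (Suc m)}. \<Phi> (Suc m) (restrict x {1..Suc m}) b = Wf G1 Gm r x m b"
      using Suc.IH Suc.prems by (meson Suc_leD)
    have k: "Suc (Suc m) \<in> {2..d-1}" using Suc.prems by auto
    show ?case
    proof (rule AE_finite_allI)
      fix b assume b: "b \<in> {1..r (Suc (Suc m))}"
      have "AE y in cube {1..Suc (Suc m)}.
        (\<Sum>a\<in>{1..r (Suc m)}. \<Phi> (Suc m) (restrict y {1..Suc m}) a * Gm (Suc (Suc m)) a (y (Suc (Suc m))) b) = \<Phi> (Suc (Suc m)) y b"
        using bspec[OF bspec[OF CE2 k] b] by simp
      from AE_up[OF _ _ this, of "{1..d}"] Suc.prems
      have "AE x in cube {1..d}.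
        (\<Sum>a\<in>{1..r (Suc m)}. \<Phi> (Suc m) (restrict (restrict x {1..Suc (Suc m)}) {1..Suc m}) a * Gm (Suc (Suc m)) a (restrict x {1..Suc (Suc m)} (Suc (Suc m))) b)
          = \<Phi> (Suc (Suc m)) (restrict x {1..Suc (Suc m)}) b" by simp
      moreover have "{1..Suc (Suc m)} \<inter> {1..Suc m} = {1..Suc m}" by auto
      ultimately have "AE x in cube {1..d}.
        (\<Sum>a\<in>{1..r (Suc m)}. \<Phi> (Suc m) (restrict x {1..Suc m}) a * Gm (Suc (Suc m)) a (x (Suc (Suc m))) b)
          = \<Phi> (Suc (Suc m)) (restrict x {1..Suc (Suc m)}) b" by (simp add: restrict_restrict)
      then show "AE x in cube {1..d}. \<Phi> (Suc (Suc m)) (restrict x {1..Suc (Suc m)}) b = Wf G1 Gm r x (Suc m) b"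
        using IH by eventually_elim simp
    qed simp
  qed
  have TT: "AE x in cube {1..d}. p x = tt_eval d r G1 Gm Gd x"
  proof -
    have sd: "Suc (d - 2) = d - 1" using d by auto
    have "AE x in cube {1..d}. \<forall>b\<in>{1..r (d-1)}. \<Phi> (d-1) (restrict x {1..d-1}) b = Wf G1 Gm r x (d-2) b"
      using claim[of "d-2"] unfolding sd by simp
    then show ?thesis using CE3
    proof eventually_elim
      case (elim x)
      then show ?case unfolding tt_Wf[OF d] by (metis (no_types, lifting) sum.cong)
    qed
  qed
  show ?thesis using CE UQ TT by blast
qed

end
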